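(* Fix an integer $d\ge 2$ and for $k\ge2$ let $G_k=\prod_{i=1}^d P_k$ be the $d$-dimensional grid with all sides of $k$ vertices. There are constants $a_1,a_2,b_1,b_2>0$, depending only on $d$, such that for all $k\ge2$: $$a_1k\le\mathrm{bdim}(G_k)\le a_2k, \qquad b_1k^d\le\mathrm{adim}(G_k)\le b_2k^d.$$ Moreover, the ratios $\mathrm{adim}(G)/\mathrm{bdim}(G)$ and $\mathrm{bdim}(G)/\dim(G)$ are unbounded over connected graphs $G$; in particular, for each fixed $d\ge2$ both tend to infinity along $G_k$ as $k\to\infty$.
   Context: $\prod_{i=1}^d P_k$ is the iterated Cartesian product of $d$ copies of the path $P_k$. $d(x,y)$ denotes graph distance. A set $S\subseteq V(G)$ is a resolving set if for all distinct $x,y$ there is $z\in S$ with $d(x,z)\ne d(y,z)$. $\dim(G)$ is the minimum size of a resolving set. For an integer $k\ge1$ let $d_k(x,y)=\min\{d(x,y),k+1\}$. A set $A\subseteq V(G)$ is an adjacency resolving set if for all distinct $x,y\in V(G)$ there is $z\in A$ with $d_1(x,z)\ne d_1(y,z)$. $\mathrm{adim}(G)$ is the minimum size of an adjacency resolving set. A function $f:V(G)\to\mathbb{Z}_{\ge 0}$ is a resolving broadcast of $G$ if for all distinct $x,y\in V(G)$ there is $z\in V(G)$ with $f(z)=i>0$ and $d_i(x,z)\ne d_i(y,z)$. The broadcast dimension $\mathrm{bdim}(G)$ is the minimum of $\sum_{v\in V(G)}f(v)$ over all resolving broadcasts $f$ of $G$. *)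

theory Defs
  imports Complex_Main
begin

definition is_walk :: "'a set \<Rightarrow> ('a \<Rightarrow> 'a \<Rightarrow> bool) \<Rightarrow> 'a list \<Rightarrow> bool" where
  "is_walk V E xs \<longleftrightarrow> xs \<noteq> [] \<and> set xs \<subseteq> V \<and> (\<forall>i. Suc i < length xs \<longrightarrow> E (xs ! i) (xs ! Suc i))"

definition gdist :: "'a set \<Rightarrow> ('a \<Rightarrow> 'a \<Rightarrow> bool) \<Rightarrow> 'a \<Rightarrow> 'a \<Rightarrow> nat" where
  "gdist V E x y = (LEAST n. \<exists>xs. is_walk V E xs \<and> hd xs = x \<and> last xs = y \<and> length xs = Suc n)"

definition tdist :: "'a set \<Rightarrow> ('a \<Rightarrow> 'a \<Rightarrow> bool) \<Rightarrow> nat \<Rightarrow> 'a \<Rightarrow> 'a \<Rightarrow> nat" where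
  "tdist V E k x y = min (gdist V E x y) (k + 1)"

definition resolving_set :: "'a set \<Rightarrow> ('a \<Rightarrow> 'a \<Rightarrow> bool) \<Rightarrow> 'a set \<Rightarrow> bool" where
  "resolving_set V E S \<longleftrightarrow> S \<subseteq> V \<and>
     (\<forall>x\<in>V. \<forall>y\<in>V. x \<noteq> y \<longrightarrow> (\<exists>z\<in>S. gdist V E x z \<noteq> gdist V E y z))"

definition metric_dim :: "'a set \<Rightarrow> ('a \<Rightarrow> 'a \<Rightarrow> bool) \<Rightarrow> nat" where
  "metric_dim V E = (LEAST n. \<exists>S. finite S \<and> resolving_set V E S \<and> card S = n)"

definition adj_resolving_set :: "'a set \<Rightarrow> ('a \<Rightarrow> 'a \<Rightarrow> bool) \<Rightarrow> 'a set \<Rightarrow> bool" where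
  "adj_resolving_set V E A \<longleftrightarrow> A \<subseteq> V \<and>
     (\<forall>x\<in>V. \<forall>y\<in>V. x \<noteq> y \<longrightarrow> (\<exists>z\<in>A. tdist V E 1 x z \<noteq> tdist V E 1 y z))"

definition adim :: "'a set \<Rightarrow> ('a \<Rightarrow> 'a \<Rightarrow> bool) \<Rightarrow> nat" where
  "adim V E = (LEAST n. \<exists>A. finite A \<and> adj_resolving_set V E A \<and> card A = n)"

definition resolving_broadcast :: "'a set \<Rightarrow> ('a \<Rightarrow> 'a \<Rightarrow> bool) \<Rightarrow> ('a \<Rightarrow> nat) \<Rightarrow> bool" where
  "resolving_broadcast V E f \<longleftrightarrow> (\<forall>v. v \<notin> V \<longrightarrow> f v = 0) \<and>
     (\<forall>x\<in>V. \<forall>y\<in>V. x \<noteq> y \<longrightarrow>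
        (\<exists>z\<in>V. f z > 0 \<and> tdist V E (f z) x z \<noteq> tdist V E (f z) y z))"

definition bdim :: "'a set \<Rightarrow> ('a \<Rightarrow> 'a \<Rightarrow> bool) \<Rightarrow> nat" where
  "bdim V E = (LEAST n. \<exists>f. resolving_broadcast V E f \<and> (\<Sum>v\<in>V. f v) = n)"

text \<open>The grid \<Prod>_{i=1}^d P_k: vertices are lists of length d with entries in {0..<k};
  two vertices are adjacent iff they differ in exactly one coordinate, by exactly 1
  (Cartesian product of paths).\<close>
definition grid_V :: "nat \<Rightarrow> nat \<Rightarrow> nat list set" where
  "grid_V d k = {xs. length xs = d \<and> (\<forall>i<d. xs ! i < k)}"

definition grid_E :: "nat list \<Rightarrow> nat list \<Rightarrow> bool" where
  "grid_E xs ys \<longleftrightarrow> length xs = length ys \<and>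
     (\<exists>i<length xs. (ys ! i = Suc (xs ! i) \<or> xs ! i = Suc (ys ! i)) \<and>
        (\<forall>j<length xs. j \<noteq> i \<longrightarrow> xs ! j = ys ! j))"

end

theory Submission
  imports Defs
begin

definition nd :: "nat \<Rightarrow> nat \<Rightarrow> nat" where "nd a b = (a - b) + (b - a)"
definition dist1 :: "nat list \<Rightarrow> nat list \<Rightarrow> nat" where
  "dist1 x y = (\<Sum>j<length x. nd (x!j) (y!j))"

lemma nd_self[simp]: "nd a a = 0" by (simp add: nd_def)

lemma dist1_self[simp]: "dist1 x x = 0" by (simp add: dist1_def)

lemma dist1_0: "length x = length y \<Longrightarrow> dist1 x y = 0 \<Longrightarrow> x = y"
  unfolding dist1_def nd_def
  by (auto intro!: nth_equalityI) (meson le_antisym lessThan_iff)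

lemma dist1_triangle:
  assumes "length x = length y" "length y = length z"
  shows "dist1 x z \<le> dist1 x y + dist1 y z"
proof -
  have "dist1 x z \<le> (\<Sum>j<length x. nd (x!j) (y!j) + nd (y!j) (z!j))"
    unfolding dist1_def by (rule sum_mono) (auto simp: nd_def)
  also have "\<dots> = dist1 x y + dist1 y z" using assms by (simp add: dist1_def sum.distrib)
  finally show ?thesis .
qed

lemma grid_E_dist1: assumes "grid_E x y" shows "dist1 x y \<le> 1"
proof -
  obtain i where i: "i < length x" "y ! i = Suc (x ! i) \<or> x ! i = Suc (y ! i)"
    "\<forall>j<length x. j \<noteq> i \<longrightarrow> x ! j = y ! j" using assms unfolding grid_E_def by blast
  have "dist1 x y \<le> (\<Sum>j<length x. if j = i then 1 else 0)"
    unfolding dist1_def by (rule sum_mono) (use i in \<open>auto simp: nd_def\<close>)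
  also have "\<dots> = 1" using i by simp
  finally show ?thesis .
qed

lemma walk_dist:
  assumes "\<forall>v\<in>V. length v = d"
  shows "set xs \<subseteq> V \<Longrightarrow> (\<forall>i. Suc i < length xs \<longrightarrow> grid_E (xs!i) (xs!Suc i)) \<Longrightarrow> xs \<noteq> []
    \<Longrightarrow> dist1 (hd xs) (last xs) \<le> length xs - 1"
proof (induction xs)
  case Nil then show ?case by simp
next
  case (Cons a xs)
  show ?case
  proof (cases "xs = []")
    case True then show ?thesis by simp
  next
    case False
    have IH: "dist1 (hd xs) (last xs) \<le> length xs - 1"
      apply (rule Cons.IH)
      using Cons.prems False by auto
    have E: "grid_E a (hd xs)" using Cons.prems(2)[rule_format, of 0] False
      by (simp add: hd_conv_nth)
    have l: "length a = d" "length (hd xs) = d" "length (last xs) = d"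
    proof -
      have "hd xs \<in> V" "last xs \<in> V" "a \<in> V" using Cons.prems(1) hd_in_set[OF False] last_in_set[OF False] by auto
      then show "length a = d" "length (hd xs) = d" "length (last xs) = d" using assms by auto
    qed
    have "dist1 a (last xs) \<le> dist1 a (hd xs) + dist1 (hd xs) (last xs)"
      by (rule dist1_triangle) (use l in auto)
    moreover have "0 < length xs" using False by simp
    ultimately have "dist1 a (last xs) \<le> length xs" using IH grid_E_dist1[OF E] by linarith
    then show ?thesis using False by simp
  qed
qed

lemma sum_upd:
  assumes "i < n" "\<And>j. j \<noteq> i \<Longrightarrow> a j = b j"
  shows "(\<Sum>j<(n::nat). a j) + b i = (\<Sum>j<n. b j) + (a i :: nat)"
proof -
  have "(\<Sum>j<n. a j) = a i + (\<Sum>j\<in>{..<n}-{i}. a j)" using assms(1) sum.remove[of "{..<n}" i a] by simp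
  moreover have "(\<Sum>j<n. b j) = b i + (\<Sum>j\<in>{..<n}-{i}. b j)" using assms(1) sum.remove[of "{..<n}" i b] by simp
  moreover have "(\<Sum>j\<in>{..<n}-{i}. a j) = (\<Sum>j\<in>{..<n}-{i}. b j)" using assms(2) by (intro sum.cong) auto
  ultimately show ?thesis by simp
qed

lemma grid_V_len: "x \<in> grid_V d k \<Longrightarrow> length x = d" by (simp add: grid_V_def)

lemma step_exists:
  assumes x: "x \<in> grid_V d k" and y: "y \<in> grid_V d k" and ne: "x \<noteq> y"
  shows "\<exists>x'\<in>grid_V d k. grid_E x x' \<and> dist1 x' y + 1 = dist1 x y"
proof -
  have lx: "length x = d" and ly: "length y = d" using x y by (auto simp: grid_V_def)
  obtain i where i: "i < d" "x ! i \<noteq> y ! i" using ne lx ly by (metis nth_equalityI)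
  define v where "v = (if x!i < y!i then Suc (x!i) else x!i - 1)"
  define x' where "x' = x[i := v]"
  have yi: "y ! i < k" using y i by (simp add: grid_V_def)
  have x'V: "x' \<in> grid_V d k" using x yi i unfolding x'_def grid_V_def v_def
    by (auto simp: nth_list_update)
  have E: "grid_E x x'" unfolding grid_E_def x'_def using i lx
    by (intro conjI exI[of _ i]) (auto simp: v_def nth_list_update)
  have "(\<Sum>j<d. nd (x'!j) (y!j)) + nd (x!i) (y!i) = (\<Sum>j<d. nd (x!j) (y!j)) + nd (x'!i) (y!i)"
    by (rule sum_upd) (use i lx in \<open>auto simp: x'_def\<close>)
  moreover have "nd (x'!i) (y!i) + 1 = nd (x!i) (y!i)" using i lx
    by (auto simp: x'_def v_def nd_def)
  ultimately have "dist1 x' y + 1 = dist1 x y" using lx by (simp add: dist1_def x'_def)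
  then show ?thesis using x'V E by blast
qed

lemma is_walk_Cons:
  assumes "is_walk V E xs" "x \<in> V" "E x (hd xs)"
  shows "is_walk V E (x # xs)"
  using assms unfolding is_walk_def
  by (auto simp: hd_conv_nth nth_Cons split: nat.splits)

lemma walk_exists:
  assumes y: "y \<in> grid_V d k"
  shows "\<forall>x\<in>grid_V d k. dist1 x y = n \<longrightarrow>
     (\<exists>xs. is_walk (grid_V d k) grid_E xs \<and> hd xs = x \<and> last xs = y \<and> length xs = Suc n)"
proof (induction n)
  case 0
  show ?case
  proof (intro ballI impI)
    fix x assume x: "x \<in> grid_V d k" and "dist1 x y = 0"
    then have "x = y" using y by (intro dist1_0) (auto simp: grid_V_def)
    then show "\<exists>xs. is_walk (grid_V d k) grid_E xs \<and> hd xs = x \<and> last xs = y \<and> length xs = Suc 0"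
      using x by (intro exI[of _ "[x]"]) (auto simp: is_walk_def)
  qed
next
  case (Suc n)
  show ?case
  proof (intro ballI impI)
    fix x assume x: "x \<in> grid_V d k" and dx: "dist1 x y = Suc n"
    then have "x \<noteq> y" by auto
    then obtain x' where x': "x' \<in> grid_V d k" "grid_E x x'" "dist1 x' y + 1 = dist1 x y"
      using step_exists[OF x y] by blast
    then obtain xs where xs: "is_walk (grid_V d k) grid_E xs" "hd xs = x'" "last xs = y" "length xs = Suc n"
      using Suc.IH dx by auto
    have "is_walk (grid_V d k) grid_E (x # xs)" using xs x x' by (intro is_walk_Cons) auto
    then show "\<exists>xs. is_walk (grid_V d k) grid_E xs \<and> hd xs = x \<and> last xs = y \<and> length xs = Suc (Suc n)"
      using xs by (intro exI[of _ "x # xs"]) (auto simp: is_walk_def)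
  qed
qed

lemma gdist_walk:
  assumes x: "x \<in> grid_V d k" and y: "y \<in> grid_V d k"
  shows "gdist (grid_V d k) grid_E x y = dist1 x y"
    and "\<exists>xs. is_walk (grid_V d k) grid_E xs \<and> hd xs = x \<and> last xs = y
            \<and> length xs = Suc (gdist (grid_V d k) grid_E x y)"
proof -
  let ?P = "\<lambda>n. \<exists>xs. is_walk (grid_V d k) grid_E xs \<and> hd xs = x \<and> last xs = y \<and> length xs = Suc n"
  have ex: "?P (dist1 x y)" using walk_exists[OF y] x by blast
  show w: "?P (gdist (grid_V d k) grid_E x y)" unfolding gdist_def by (rule LeastI[of ?P, OF ex])
  have le: "gdist (grid_V d k) grid_E x y \<le> dist1 x y" unfolding gdist_def by (rule Least_le[of ?P, OF ex])
  obtain xs where xs: "is_walk (grid_V d k) grid_E xs" "hd xs = x" "last xs = y"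
    "length xs = Suc (gdist (grid_V d k) grid_E x y)" using w by blast
  have "dist1 (hd xs) (last xs) \<le> length xs - 1"
    by (rule walk_dist[of "grid_V d k" d]) (use xs in \<open>auto simp: is_walk_def grid_V_def\<close>)
  then show "gdist (grid_V d k) grid_E x y = dist1 x y" using xs le by simp
qed


definition corners :: "nat \<Rightarrow> nat \<Rightarrow> nat list set" where
  "corners d k = insert (replicate d 0) ((\<lambda>i. (replicate d 0)[i := k - 1]) ` {..<d})"

lemma corners_sub: "1 \<le> k \<Longrightarrow> corners d k \<subseteq> grid_V d k"
  unfolding corners_def grid_V_def by (auto simp: nth_list_update)

lemma corners_card: "card (corners d k) \<le> d + 1"
proof -
  have "card (corners d k) \<le> Suc (card ((\<lambda>i. (replicate d 0)[i := k - 1]) ` {..<d}))"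
    unfolding corners_def by (simp add: card_insert_if)
  also have "card ((\<lambda>i. (replicate d (0::nat))[i := k - 1]) ` {..<d}) \<le> d"
    using card_image_le[of "{..<d}"] by fastforce
  finally show ?thesis by simp
qed

lemma dist1_corner:
  assumes "length x = d" "i < d"
  shows "dist1 x ((replicate d 0)[i := k - 1]) + nd (x!i) 0 = dist1 x (replicate d 0) + nd (x!i) (k - 1)"
proof -
  have "(\<Sum>j<d. nd (x!j) (((replicate d 0)[i := k - 1])!j)) + nd (x!i) (replicate d 0 ! i)
      = (\<Sum>j<d. nd (x!j) (replicate d 0 ! j)) + nd (x!i) (((replicate d 0)[i := k - 1])!i)"
    by (rule sum_upd) (use assms in auto)
  then show ?thesis using assms by (simp add: dist1_def)
qed

lemma corners_resolve:
  assumes k: "1 \<le> k" and x: "x \<in> grid_V d k" and y: "y \<in> grid_V d k" and ne: "x \<noteq> y"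
  shows "\<exists>z\<in>corners d k. dist1 x z \<noteq> dist1 y z"
proof (cases "dist1 x (replicate d 0) = dist1 y (replicate d 0)")
  case False then show ?thesis unfolding corners_def by blast
next
  case True
  have lx: "length x = d" and ly: "length y = d" using x y by (auto simp: grid_V_def)
  obtain i where i: "i < d" "x ! i \<noteq> y ! i" using ne lx ly by (metis nth_equalityI)
  have xi: "x!i < k" "y!i < k" using x y i by (auto simp: grid_V_def)
  have a: "dist1 x ((replicate d 0)[i := k - 1]) + nd (x!i) 0 = dist1 x (replicate d 0) + nd (x!i) (k - 1)"
    by (rule dist1_corner[OF lx i(1)])
  have b: "dist1 y ((replicate d 0)[i := k - 1]) + nd (y!i) 0 = dist1 y (replicate d 0) + nd (y!i) (k - 1)"
    by (rule dist1_corner[OF ly i(1)])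
  have "dist1 x ((replicate d 0)[i := k - 1]) \<noteq> dist1 y ((replicate d 0)[i := k - 1])"
    using a b True xi i(2) by (auto simp: nd_def)
  then show ?thesis using i unfolding corners_def by blast
qed

lemma dist1_le_diam:
  assumes x: "x \<in> grid_V d k" and y: "y \<in> grid_V d k"
  shows "dist1 x y \<le> d * (k - 1)"
proof -
  have "dist1 x y = (\<Sum>j<d. nd (x!j) (y!j))" using x by (simp add: dist1_def grid_V_def)
  also have "\<dots> \<le> of_nat (card {..<d}) * (k - 1)"
  proof (rule sum_bounded_above)
    fix j assume "j \<in> {..<d}"
    then have "x!j < k" "y!j < k" using x y by (auto simp: grid_V_def)
    then show "nd (x!j) (y!j) \<le> k - 1" by (simp add: nd_def)
  qed
  finally show ?thesis by simp
qed

lemma gdist_le1: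
  assumes x: "x \<in> grid_V d k" and z: "z \<in> grid_V d k" and g: "gdist (grid_V d k) grid_E x z \<le> 1"
  shows "x = z \<or> grid_E x z"
proof -
  obtain xs where xs: "is_walk (grid_V d k) grid_E xs" "hd xs = x" "last xs = z"
    "length xs = Suc (gdist (grid_V d k) grid_E x z)" using gdist_walk(2)[OF x z] by blast
  show ?thesis
  proof (cases "gdist (grid_V d k) grid_E x z = 0")
    case True
    then obtain a where "xs = [a]" using xs(4) by (metis length_0_conv length_Suc_conv)
    then show ?thesis using xs by simp
  next
    case False
    then have "length xs = 2" using xs(4) g by simp
    then obtain a b where ab: "xs = [a, b]"
      by (metis One_nat_def Suc_1 length_0_conv length_Suc_conv)
    then have "grid_E a b" using xs(1) unfolding is_walk_def by force
    then show ?thesis using xs ab by simp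
  qed
qed

lemma nbhd:
  assumes E: "grid_E x z" and lz: "length z = d"
  shows "x \<in> (\<lambda>i. z[i := Suc (z!i)]) ` {..<d} \<union> (\<lambda>i. z[i := z!i - 1]) ` {..<d}"
proof -
  obtain i where i: "i < length x" "z ! i = Suc (x ! i) \<or> x ! i = Suc (z ! i)"
    "\<forall>j<length x. j \<noteq> i \<longrightarrow> x ! j = z ! j" and lx: "length x = length z"
    using E unfolding grid_E_def by blast
  show ?thesis
  proof (cases "z ! i = Suc (x ! i)")
    case True
    have "x = z[i := z!i - 1]" using i lx True by (intro nth_equalityI) (auto simp: nth_list_update)
    then show ?thesis using i lx lz by (intro UnI2 rev_image_eqI[of i]) auto
  next
    case False
    then have "x ! i = Suc (z ! i)" using i by blast
    then have "x = z[i := Suc (z!i)]" using i lx by (intro nth_equalityI) (auto simp: nth_list_update)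
    then show ?thesis using i lx lz by (intro UnI1 rev_image_eqI[of i]) auto
  qed
qed

lemma grid_V_eq: "grid_V d k = {xs. set xs \<subseteq> {..<k} \<and> length xs = d}"
  unfolding grid_V_def by (auto simp: in_set_conv_nth) (meson nth_mem subsetD lessThan_iff)

lemma grid_V_finite: "finite (grid_V d k)"
  unfolding grid_V_eq by (rule finite_lists_length_eq) simp

lemma grid_V_card: "card (grid_V d k) = k ^ d"
  unfolding grid_V_eq by (subst card_lists_length_eq) simp_all


lemma gdist_pos:
  assumes "x \<in> grid_V d k" "y \<in> grid_V d k" "x \<noteq> y"
  shows "gdist (grid_V d k) grid_E x y \<ge> 1"
proof -
  have "dist1 x y \<noteq> 0" using assms dist1_0[of x y] by (auto simp: grid_V_def)
  then show ?thesis using gdist_walk(1)[OF assms(1,2)] by simp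
qed

lemma two_vertices:
  assumes "1 \<le> d" "2 \<le> k"
  shows "replicate d 0 \<in> grid_V d k" "(replicate d 0)[0 := 1] \<in> grid_V d k"
    "replicate d (0::nat) \<noteq> (replicate d 0)[0 := 1]"
proof -
  show "replicate d 0 \<in> grid_V d k" using assms by (simp add: grid_V_def)
  show "(replicate d 0)[0 := 1] \<in> grid_V d k" using assms by (auto simp: grid_V_def nth_list_update)
  have "((replicate d (0::nat))[0 := 1]) ! 0 = 1" using assms by simp
  moreover have "(replicate d (0::nat)) ! 0 = 0" using assms by simp
  ultimately show "replicate d (0::nat) \<noteq> (replicate d 0)[0 := 1]" by (metis zero_neq_one)
qed

lemma metric_dim_bounds:
  assumes d: "1 \<le> d" and k: "2 \<le> k"
  shows "1 \<le> metric_dim (grid_V d k) grid_E" "metric_dim (grid_V d k) grid_E \<le> d + 1"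
proof -
  let ?P = "\<lambda>n. \<exists>S. finite S \<and> resolving_set (grid_V d k) grid_E S \<and> card S = n"
  have fin: "finite (corners d k)" unfolding corners_def by simp
  have rs: "resolving_set (grid_V d k) grid_E (corners d k)"
    unfolding resolving_set_def
  proof (intro conjI ballI impI)
    show "corners d k \<subseteq> grid_V d k" using corners_sub k by simp
    fix x y assume x: "x \<in> grid_V d k" and y: "y \<in> grid_V d k" and "x \<noteq> y"
    then obtain z where z: "z \<in> corners d k" "dist1 x z \<noteq> dist1 y z"
      using corners_resolve[of k] k by fastforce
    have zV: "z \<in> grid_V d k" using z corners_sub[of k d] k by auto
    show "\<exists>z\<in>corners d k. gdist (grid_V d k) grid_E x z \<noteq> gdist (grid_V d k) grid_E y z"
      using z gdist_walk(1)[OF x zV] gdist_walk(1)[OF y zV] by (intro bexI[of _ z]) simp_all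
  qed
  have ex: "?P (card (corners d k))" using fin rs by blast
  have "metric_dim (grid_V d k) grid_E \<le> card (corners d k)"
    unfolding metric_dim_def by (rule Least_le[of ?P, OF ex])
  then show "metric_dim (grid_V d k) grid_E \<le> d + 1" using corners_card[of d k] by simp
  have "?P (metric_dim (grid_V d k) grid_E)"
    unfolding metric_dim_def by (rule LeastI[of ?P, OF ex])
  then obtain S where S: "finite S" "resolving_set (grid_V d k) grid_E S"
    "card S = metric_dim (grid_V d k) grid_E" by blast
  show "1 \<le> metric_dim (grid_V d k) grid_E"
  proof (rule ccontr)
    assume "\<not> 1 \<le> metric_dim (grid_V d k) grid_E"
    then have "card S = 0" using S by simp
    then have "S = {}" using S(1) by simp
    then show False using S(2) two_vertices[OF d k] unfolding resolving_set_def by blast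
  qed
qed

lemma adim_bounds:
  assumes d: "1 \<le> d" and k: "2 \<le> k"
  shows "adim (grid_V d k) grid_E \<le> k ^ d" "k ^ d \<le> (2 * d + 1) * adim (grid_V d k) grid_E + 1"
proof -
  let ?V = "grid_V d k"
  let ?P = "\<lambda>n. \<exists>A. finite A \<and> adj_resolving_set ?V grid_E A \<and> card A = n"
  have rs: "adj_resolving_set ?V grid_E ?V"
    unfolding adj_resolving_set_def
  proof (intro conjI ballI impI)
    fix x y assume x: "x \<in> ?V" and y: "y \<in> ?V" and ne: "x \<noteq> y"
    have "tdist ?V grid_E 1 x x = 0" using gdist_walk(1)[OF x x] by (simp add: tdist_def)
    moreover have "tdist ?V grid_E 1 y x \<ge> 1" using gdist_pos[OF y x] ne by (simp add: tdist_def)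
    ultimately show "\<exists>z\<in>?V. tdist ?V grid_E 1 x z \<noteq> tdist ?V grid_E 1 y z" using x by force
  qed simp
  have ex: "?P (card ?V)" using rs grid_V_finite by blast
  have "adim ?V grid_E \<le> card ?V" unfolding adim_def by (rule Least_le[of ?P, OF ex])
  then show "adim ?V grid_E \<le> k ^ d" using grid_V_card by simp
  have "?P (adim ?V grid_E)" unfolding adim_def by (rule LeastI[of ?P, OF ex])
  then obtain A where A: "finite A" "adj_resolving_set ?V grid_E A" "card A = adim ?V grid_E" by blast
  have AV: "A \<subseteq> ?V" using A(2) by (simp add: adj_resolving_set_def)
  define N where "N z = insert z ((\<lambda>i. z[i := Suc (z!i)]) ` {..<d} \<union> (\<lambda>i. z[i := z!i - 1]) ` {..<d})" for z
  define W where "W = {x\<in>?V. \<forall>z\<in>A. \<not> gdist ?V grid_E x z \<le> 1}"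
  have cover: "?V \<subseteq> (\<Union>z\<in>A. N z) \<union> W"
  proof
    fix x assume x: "x \<in> ?V"
    show "x \<in> (\<Union>z\<in>A. N z) \<union> W"
    proof (cases "\<exists>z\<in>A. gdist ?V grid_E x z \<le> 1")
      case True
      then obtain z where z: "z \<in> A" "gdist ?V grid_E x z \<le> 1" by blast
      have zV: "z \<in> ?V" using z AV by auto
      have "x = z \<or> grid_E x z" by (rule gdist_le1[OF x zV z(2)])
      then have "x \<in> N z" unfolding N_def using nbhd[of x z d] grid_V_len[OF zV] by blast
      then show ?thesis using z by blast
    next
      case False then show ?thesis using x unfolding W_def by blast
    qed
  qed
  have W1: "card W \<le> 1"
  proof -
    have "finite W" unfolding W_def using grid_V_finite by simp
    moreover have "\<forall>a\<in>W. \<forall>b\<in>W. a = b"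
    proof (intro ballI, rule ccontr)
      fix a b assume a: "a \<in> W" and b: "b \<in> W" and ne: "a \<noteq> b"
      then obtain z where z: "z \<in> A" "tdist ?V grid_E 1 a z \<noteq> tdist ?V grid_E 1 b z"
        using A(2) unfolding adj_resolving_set_def W_def by blast
      have "gdist ?V grid_E a z \<ge> 2" "gdist ?V grid_E b z \<ge> 2" using a b z(1) unfolding W_def by auto
      then show False using z(2) by (simp add: tdist_def)
    qed
    ultimately show ?thesis using card_le_Suc0_iff_eq by auto
  qed
  have Nc: "card (N z) \<le> 2 * d + 1" for z
  proof -
    have "card (N z) \<le> Suc (card ((\<lambda>i. z[i := Suc (z!i)]) ` {..<d} \<union> (\<lambda>i. z[i := z!i - 1]) ` {..<d}))"
      unfolding N_def by (simp add: card_insert_if)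
    also have "card ((\<lambda>i. z[i := Suc (z!i)]) ` {..<d} \<union> (\<lambda>i. z[i := z!i - 1]) ` {..<d})
       \<le> card ((\<lambda>i. z[i := Suc (z!i)]) ` {..<d}) + card ((\<lambda>i. z[i := z!i - 1]) ` {..<d})"
      by (rule card_Un_le)
    also have "\<dots> \<le> d + d" using card_image_le[of "{..<d}"] by (metis add_mono card_lessThan finite_lessThan)
    finally show ?thesis by simp
  qed
  have fN: "finite (N z)" for z unfolding N_def by simp
  have "k ^ d = card ?V" using grid_V_card by simp
  also have "\<dots> \<le> card ((\<Union>z\<in>A. N z) \<union> W)"
    by (rule card_mono) (use A(1) fN grid_V_finite cover W_def in auto)
  also have "\<dots> \<le> card (\<Union>z\<in>A. N z) + card W" by (rule card_Un_le)
  also have "card (\<Union>z\<in>A. N z) \<le> (\<Sum>z\<in>A. card (N z))" by (rule card_UN_le[OF A(1)])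
  also have "(\<Sum>z\<in>A. card (N z)) \<le> (\<Sum>z\<in>A. 2 * d + 1)" by (rule sum_mono) (rule Nc)
  finally show "k ^ d \<le> (2 * d + 1) * adim ?V grid_E + 1" using W1 A(3) by (simp add: mult.commute)
qed


lemma card_near: "card {j::nat. nd j c \<le> p} \<le> 2 * p + 1"
proof -
  have "{j::nat. nd j c \<le> p} \<subseteq> {c - p .. c + p}" by (auto simp: nd_def)
  then have "card {j::nat. nd j c \<le> p} \<le> card {c - p .. c + p}" by (rule card_mono[rotated]) simp
  also have "\<dots> \<le> 2 * p + 1" by simp
  finally show ?thesis .
qed

lemma finite_near: "finite {j::nat. nd j c \<le> p}"
  by (rule finite_subset[of _ "{c - p .. c + p}"]) (auto simp: nd_def)

lemma bdim_bounds:
  assumes d: "1 \<le> d" and k: "2 \<le> k"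
  shows "bdim (grid_V d k) grid_E \<le> (d + 1) * d * k" "k \<le> 6 * bdim (grid_V d k) grid_E"
proof -
  let ?V = "grid_V d k"
  let ?P = "\<lambda>n. \<exists>f. resolving_broadcast ?V grid_E f \<and> (\<Sum>v\<in>?V. f v) = n"
  define D where "D = d * (k - 1)"
  have Dpos: "0 < D" using d k by (simp add: D_def)
  define f0 where "f0 v = (if v \<in> corners d k then D else 0)" for v
  have CV: "corners d k \<subseteq> ?V" using corners_sub[of k d] k by simp
  have rb: "resolving_broadcast ?V grid_E f0"
    unfolding resolving_broadcast_def
  proof (intro conjI allI impI ballI)
    fix v assume "v \<notin> ?V" then show "f0 v = 0" using CV by (auto simp: f0_def)
  next
    fix x y assume x: "x \<in> ?V" and y: "y \<in> ?V" and "x \<noteq> y"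
    then obtain z where z: "z \<in> corners d k" "dist1 x z \<noteq> dist1 y z"
      using corners_resolve[of k] k by fastforce
    have zV: "z \<in> ?V" using z CV by auto
    have "tdist ?V grid_E (f0 z) x z = dist1 x z" "tdist ?V grid_E (f0 z) y z = dist1 y z"
      using z(1) gdist_walk(1)[OF x zV] gdist_walk(1)[OF y zV] dist1_le_diam[OF x zV] dist1_le_diam[OF y zV]
      by (auto simp: tdist_def f0_def D_def)
    moreover have "f0 z > 0" using z(1) Dpos by (simp add: f0_def)
    ultimately show "\<exists>z\<in>?V. 0 < f0 z \<and> tdist ?V grid_E (f0 z) x z \<noteq> tdist ?V grid_E (f0 z) y z"
      using zV z(2) by (intro bexI[of _ z]) auto
  qed
  have sum0: "(\<Sum>v\<in>?V. f0 v) = card (corners d k) * D"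
  proof -
    have "(\<Sum>v\<in>?V. f0 v) = (\<Sum>v\<in>?V \<inter> corners d k. D)"
      unfolding f0_def using sum.inter_restrict[OF grid_V_finite[of d k], of "\<lambda>_. D" "corners d k"] by simp
    also have "?V \<inter> corners d k = corners d k" using CV by blast
    finally show ?thesis by simp
  qed
  have ex: "?P (card (corners d k) * D)" using rb sum0 by blast
  have "bdim ?V grid_E \<le> card (corners d k) * D" unfolding bdim_def by (rule Least_le[of ?P, OF ex])
  also have "\<dots> \<le> (d + 1) * D" using corners_card[of d k] by (rule mult_right_mono) simp
  also have "\<dots> \<le> (d + 1) * d * k" unfolding D_def mult.assoc by (intro mult_left_mono) auto
  finally show "bdim ?V grid_E \<le> (d + 1) * d * k" .
  have "?P (bdim ?V grid_E)" unfolding bdim_def by (rule LeastI[of ?P, OF ex])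
  then obtain f where f: "resolving_broadcast ?V grid_E f" "(\<Sum>v\<in>?V. f v) = bdim ?V grid_E" by blast
  define line where "line j = (replicate d (0::nat))[0 := j]" for j
  have lineV: "line j \<in> ?V" if "j < k" for j using that d by (auto simp: line_def grid_V_def nth_list_update)
  have line0: "line j ! 0 = j" for j using d by (simp add: line_def)
  define V' where "V' = {z\<in>?V. 0 < f z}"
  define U where "U = {j\<in>{..<k}. \<exists>z\<in>V'. gdist ?V grid_E (line j) z \<le> f z}"
  have U1: "card ({..<k} - U) \<le> 1"
  proof -
    have "\<forall>a\<in>{..<k} - U. \<forall>b\<in>{..<k} - U. a = b"
    proof (intro ballI, rule ccontr)
      fix a b assume a: "a \<in> {..<k} - U" and b: "b \<in> {..<k} - U" and ne: "a \<noteq> b"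
      have "line a \<noteq> line b" using ne line0 by metis
      then obtain z where z: "z \<in> ?V" "0 < f z" "tdist ?V grid_E (f z) (line a) z \<noteq> tdist ?V grid_E (f z) (line b) z"
        using f(1) lineV a b unfolding resolving_broadcast_def by blast
      have "gdist ?V grid_E (line a) z > f z" "gdist ?V grid_E (line b) z > f z"
        using a b z unfolding U_def V'_def by auto
      then show False using z(3) by (simp add: tdist_def)
    qed
    then show ?thesis using card_le_Suc0_iff_eq[of "{..<k} - U"] by auto
  qed
  have Usub: "U \<subseteq> (\<Union>z\<in>V'. {j. nd j (z!0) \<le> f z})"
  proof
    fix j assume j: "j \<in> U"
    then obtain z where z: "z \<in> V'" "gdist ?V grid_E (line j) z \<le> f z" and jk: "j < k"
      unfolding U_def by auto
    have zV: "z \<in> ?V" using z(1) by (simp add: V'_def)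
    have "nd j (z!0) = nd (line j ! 0) (z ! 0)" by (simp add: line0)
    also have "\<dots> \<le> dist1 (line j) z" unfolding dist1_def
      by (rule member_le_sum[where f = "\<lambda>i. nd (line j ! i) (z ! i)"]) (use d in \<open>auto simp: line_def\<close>)
    also have "\<dots> = gdist ?V grid_E (line j) z" using gdist_walk(1)[OF lineV[OF jk] zV] by simp
    finally have "nd j (z!0) \<le> f z" using z(2) by linarith
    then show "j \<in> (\<Union>z\<in>V'. {j. nd j (z!0) \<le> f z})" using z(1) by blast
  qed
  have finV': "finite V'" unfolding V'_def using grid_V_finite by simp
  have "card U \<le> card (\<Union>z\<in>V'. {j. nd j (z!0) \<le> f z})"
    by (rule card_mono[OF _ Usub]) (use finV' finite_near in \<open>auto intro!: finite_UN_I\<close>)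
  also have "\<dots> \<le> (\<Sum>z\<in>V'. card {j. nd j (z!0) \<le> f z})" by (rule card_UN_le[OF finV'])
  also have "\<dots> \<le> (\<Sum>z\<in>V'. 3 * f z)"
  proof (rule sum_mono)
    fix z assume "z \<in> V'"
    then have "0 < f z" by (simp add: V'_def)
    then show "card {j. nd j (z!0) \<le> f z} \<le> 3 * f z" using card_near[of "z!0" "f z"] by simp
  qed
  also have "\<dots> \<le> (\<Sum>z\<in>?V. 3 * f z)" by (rule sum_mono2) (use grid_V_finite in \<open>auto simp: V'_def\<close>)
  also have "\<dots> = 3 * bdim ?V grid_E" by (simp only: sum_distrib_left[symmetric] f(2))
  finally have cU: "card U \<le> 3 * bdim ?V grid_E" .
  have "k = card {..<k}" by simp
  also have "\<dots> \<le> card (U \<union> ({..<k} - U))" by (rule card_mono) (auto simp: U_def)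
  also have "\<dots> \<le> card U + card ({..<k} - U)" by (rule card_Un_le)
  finally show "k \<le> 6 * bdim ?V grid_E" using U1 cU k by linarith
qed


lemma lim_lin:
  assumes C: "0 < (C::real)" and ev: "\<And>k. 2 \<le> k \<Longrightarrow> real k / C \<le> g k"
  shows "filterlim g at_top sequentially"
proof (rule filterlim_at_top_mono)
  show "LIM k sequentially. (\<lambda>_. 1 / C) k * real k :> at_top"
    by (rule filterlim_tendsto_pos_mult_at_top[OF tendsto_const]) (use C filterlim_real_sequentially in auto)
  show "\<forall>\<^sub>F k in sequentially. (\<lambda>_. 1 / C) k * real k \<le> g k"
    using eventually_ge_at_top[of 2] by eventually_elim (use ev in auto)
qed

theorem theorem5p4:
  fixes d :: nat
  assumes "d \<ge> 2"
  shows "(\<exists>a1 a2 b1 b2 :: real. a1 > 0 \<and> a2 > 0 \<and> b1 > 0 \<and> b2 > 0 \<and>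
            (\<forall>k::nat. k \<ge> 2 \<longrightarrow>
               a1 * real k \<le> real (bdim (grid_V d k) grid_E) \<and>
               real (bdim (grid_V d k) grid_E) \<le> a2 * real k \<and>
               b1 * real k ^ d \<le> real (adim (grid_V d k) grid_E) \<and>
               real (adim (grid_V d k) grid_E) \<le> b2 * real k ^ d))
       \<and> filterlim (\<lambda>k. real (adim (grid_V d k) grid_E) / real (bdim (grid_V d k) grid_E))
            at_top sequentially
       \<and> filterlim (\<lambda>k. real (bdim (grid_V d k) grid_E) / real (metric_dim (grid_V d k) grid_E))
            at_top sequentially"
proof -
  have d1: "1 \<le> d" using assms by simp
  have kd: "k \<le> k ^ d" "k * k \<le> k ^ d" if "2 \<le> k" for k :: nat
  proof -
    show "k \<le> k ^ d" using self_le_power[of k d] that d1 by simp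
    have "k ^ 2 \<le> k ^ d" using power_increasing[of 2 d k] that assms by simp
    then show "k * k \<le> k ^ d" by (simp add: power2_eq_square)
  qed
  have Aln: "k ^ d \<le> 2 * (2 * d + 1) * adim (grid_V d k) grid_E" if k: "2 \<le> k" for k
    using adim_bounds(2)[OF d1 k] kd(1)[OF k] k by linarith
  have part1: "\<forall>k::nat. k \<ge> 2 \<longrightarrow>
               1/6 * real k \<le> real (bdim (grid_V d k) grid_E) \<and>
               real (bdim (grid_V d k) grid_E) \<le> real ((d + 1) * d) * real k \<and>
               1 / real (2 * (2 * d + 1)) * real k ^ d \<le> real (adim (grid_V d k) grid_E) \<and>
               real (adim (grid_V d k) grid_E) \<le> 1 * real k ^ d"
  proof (intro allI impI conjI)
    fix k :: nat assume k: "2 \<le> k"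
    have "real k \<le> 6 * real (bdim (grid_V d k) grid_E)"
      using bdim_bounds(2)[OF d1 k] by (metis of_nat_le_iff of_nat_mult of_nat_numeral)
    then show "1/6 * real k \<le> real (bdim (grid_V d k) grid_E)" by simp
    have "real (bdim (grid_V d k) grid_E) \<le> real ((d + 1) * d * k)"
      using bdim_bounds(1)[OF d1 k] by (metis of_nat_le_iff)
    then show "real (bdim (grid_V d k) grid_E) \<le> real ((d + 1) * d) * real k" by simp
    have "real (k ^ d) \<le> real (2 * (2 * d + 1)) * real (adim (grid_V d k) grid_E)"
      using Aln[OF k] by (metis of_nat_le_iff of_nat_mult)
    then show "1 / real (2 * (2 * d + 1)) * real k ^ d \<le> real (adim (grid_V d k) grid_E)"
      by (simp add: field_simps)
    have "real (adim (grid_V d k) grid_E) \<le> real (k ^ d)"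
      using adim_bounds(1)[OF d1 k] by (metis of_nat_le_iff)
    then show "real (adim (grid_V d k) grid_E) \<le> 1 * real k ^ d" by simp
  qed
  have c1: "\<exists>a1 a2 b1 b2 :: real. a1 > 0 \<and> a2 > 0 \<and> b1 > 0 \<and> b2 > 0 \<and>
            (\<forall>k::nat. k \<ge> 2 \<longrightarrow>
               a1 * real k \<le> real (bdim (grid_V d k) grid_E) \<and>
               real (bdim (grid_V d k) grid_E) \<le> a2 * real k \<and>
               b1 * real k ^ d \<le> real (adim (grid_V d k) grid_E) \<and>
               real (adim (grid_V d k) grid_E) \<le> b2 * real k ^ d)"
    apply (rule exI[of _ "1/6"], rule exI[of _ "real ((d + 1) * d)"],
           rule exI[of _ "1 / real (2 * (2 * d + 1))"], rule exI[of _ 1])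
    using part1 d1 by (simp only: of_nat_0_less_iff) simp
  define C1 where "C1 = 2 * (2 * d + 1) * ((d + 1) * d)"
  have c2: "filterlim (\<lambda>k. real (adim (grid_V d k) grid_E) / real (bdim (grid_V d k) grid_E))
            at_top sequentially"
  proof (rule lim_lin[of "real C1"])
    have "0 < C1" using d1 by (simp add: C1_def)
    then show "0 < real C1" by (simp only: of_nat_0_less_iff)
    fix k :: nat assume k: "2 \<le> k"
    let ?A = "adim (grid_V d k) grid_E" and ?B = "bdim (grid_V d k) grid_E"
    have Bpos: "0 < ?B" using bdim_bounds(2)[OF d1 k] k by linarith
    have "k * ?B \<le> k * ((d + 1) * d * k)" using bdim_bounds(1)[OF d1 k] by simp
    also have "\<dots> = ((d + 1) * d) * (k * k)" by simp
    also have "\<dots> \<le> ((d + 1) * d) * (2 * (2 * d + 1) * ?A)"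
      using le_trans[OF kd(2)[OF k] Aln[OF k]] by (rule mult_left_mono) simp
    also have "\<dots> = C1 * ?A" by (simp only: C1_def mult.assoc mult.commute mult.left_commute)
    finally have "k * ?B \<le> C1 * ?A" .
    then have "real k * real ?B \<le> real C1 * real ?A" by (metis of_nat_le_iff of_nat_mult)
    then show "real k / real C1 \<le> real ?A / real ?B"
      using Bpos \<open>0 < real C1\<close> by (simp add: field_simps)
  qed
  have c3: "filterlim (\<lambda>k. real (bdim (grid_V d k) grid_E) / real (metric_dim (grid_V d k) grid_E))
            at_top sequentially"
  proof (rule lim_lin[of "real (6 * (d + 1))"])
    show "0 < real (6 * (d + 1))" by simp
    fix k :: nat assume k: "2 \<le> k"
    let ?M = "metric_dim (grid_V d k) grid_E" and ?B = "bdim (grid_V d k) grid_E"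
    have Mpos: "0 < ?M" using metric_dim_bounds(1)[OF d1 k] by simp
    have "k * ?M \<le> (6 * ?B) * (d + 1)"
      using bdim_bounds(2)[OF d1 k] metric_dim_bounds(2)[OF d1 k] by (rule mult_mono) simp_all
    then have "real k * real ?M \<le> real (6 * (d + 1)) * real ?B" by (metis of_nat_le_iff of_nat_mult mult.commute mult.assoc)
    then show "real k / real (6 * (d + 1)) \<le> real ?B / real ?M"
      using Mpos by (simp add: field_simps)
  qed
  show ?thesis using c1 c2 c3 by blast
qed

end
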